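(* Let $(F_n)_{n\ge0}$ be the Fibonacci numbers, $F_0=0$, $F_1=F_2=1$, $F_{n+2}=F_{n+1}+F_n$. Then for every $n\ge1$, $$F_{2n-1}F_{(n+1)^2}=F_{2n}\left(F_{2n+1}+F_{2n-1}\right)F_{n^2}+F_{2n+1}\left(F_{2n-1}F_{2n+1}-F_{2n}^2\right)F_{(n-1)^2}.$$ *)

theory Defs
  imports "HOL-Number_Theory.Fib"
begin

end

theory Submission
  imports Defs
begin

lemma fib_shift: "fib (a + Suc m) = fib (Suc m) * fib (Suc a) + fib m * fib a"
  using fib_add[of a m] by simp

lemma key:
  fixes a j :: nat
  shows "int (fib (j+1)) * int (fib (a+2*j+4)) =
     int (fib (j+2)) * (int (fib (j+3)) + int (fib (j+1))) * int (fib (a+j+1))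
     + int (fib (j+3)) * (int (fib (j+1)) * int (fib (j+3)) - int (fib (j+2))^2) * int (fib a)"
proof -
  have e1: "fib (a+2*j+4) = fib (2*j+4) * fib (Suc a) + fib (2*j+3) * fib a"
    proof -
    have "a+2*j+4 = a + Suc (2*j+3)" by simp
    moreover have "2*j+4 = Suc (2*j+3)" by simp
    ultimately show ?thesis using fib_shift[of a "2*j+3"] by metis
  qed
  have e2: "fib (a+j+1) = fib (j+1) * fib (Suc a) + fib j * fib a"
    proof -
    have "a+j+1 = a + Suc j" by simp
    then show ?thesis using fib_shift[of a j] by simp
  qed
  have e3: "fib (2*j+4) = fib (j+2) * fib (j+3) + fib (j+1) * fib (j+2)"
    using fib_shift[of "j+1" "j+2"] by (simp add: algebra_simps numeral_eq_Suc)
  have e4: "fib (2*j+3) = fib (j+2) * fib (j+2) + fib (j+1) * fib (j+1)"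
    using fib_shift[of "j+1" "j+1"] by (simp add: algebra_simps numeral_eq_Suc)
  have e5: "fib (j+2) = fib (j+1) + fib j" by (simp add: numeral_eq_Suc)
  have e6: "fib (j+3) = fib (j+2) + fib (j+1)" by (simp add: numeral_eq_Suc)
  show ?thesis
    unfolding e1 e2 e3 e4 e6 of_nat_add of_nat_mult
    unfolding e5 of_nat_add
    by (simp add: algebra_simps power2_eq_square)
qed

theorem mainTheorem8:
  fixes n :: nat
  assumes "n \<ge> 1"
  shows "int (fib (2*n - 1)) * int (fib ((n+1)^2)) =
         int (fib (2*n)) * (int (fib (2*n+1)) + int (fib (2*n - 1))) * int (fib (n^2))
         + int (fib (2*n+1)) * (int (fib (2*n - 1)) * int (fib (2*n+1)) - int (fib (2*n))^2)
           * int (fib ((n - 1)^2))"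
proof -
  obtain m where n: "n = m + 1" using assms by (metis add.commute le_Suc_ex)
  have i1: "2*n - 1 = 2*m+1" "2*n = 2*m+2" "2*n+1 = 2*m+3" "(n-1)^2 = m^2"
    "n^2 = m^2 + 2*m + 1" "(n+1)^2 = m^2 + 2*(2*m) + 4"
    by (simp_all add: n power2_eq_square algebra_simps)
  show ?thesis unfolding i1(1) i1(3) i1(4) i1(5) i1(6) unfolding i1(2) by (rule key)
qed

end
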